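(* Let $G=\mathrm{SL}(3,\mathbb R)$, $P$ the upper triangular matrices in $G$, $\mathfrak n$ the strictly lower triangular $3\times3$ real matrices, and let $E_{ij}$ be the matrix units. For $X\in\mathfrak n$ consider the distinguished curve $t\mapsto\exp(tX)P$. Then this curve admits a projective reparameterisation for each of $X=E_{21}$, $X=E_{32}$, $X=E_{21}+E_{32}$, $X=E_{21}+E_{31}$, $X=E_{31}+E_{32}$, $X=E_{31}$, whereas for $X=E_{21}+xE_{31}+E_{32}$ with $x\neq0$ it admits only affine reparameterisations (its reparameterisations as a distinguished curve with origin at $eP$ are only $t\mapsto at$, $a\ne0$). In particular $t\mapsto\exp\big(t(E_{21}+E_{31}+E_{32})\big)P$ admits only affine reparameterisations.
   Context: A distinguished curve in $G/P$ is $t\mapsto q\exp(tY)P$ with $q\in P$, $0\ne Y\in\mathfrak n$. The curve $\gamma(t)=p\exp(tX)P$ admits a projective reparameterisation if there exist $q\in P$, $Y\in\mathfrak n$ with $p\exp(tX)P=q\exp(\tfrac{t}{t+1}Y)P$ for all $t$ near $0$; otherwise its only reparameterisations $\varphi$ with $\varphi(0)=0$ preserving distinguishedness are $t\mapsto at$. *)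

theory Defs
  imports "HOL-Analysis.Analysis"
begin

text \<open>3x3 real matrices are represented as real^3^3; rows/columns are indexed by the
numeral type 3 with elements 0 < 1 < 2 (paper index k corresponds to k-1).\<close>

type_synonym mat3 = "real^3^3"

definition E :: "nat \<Rightarrow> nat \<Rightarrow> mat3" where
  "E i j = (\<chi> r c. if r = of_nat (i - 1) \<and> c = of_nat (j - 1) then 1 else 0)"

definition mpow :: "mat3 \<Rightarrow> nat \<Rightarrow> mat3" where
  "mpow A k = (((**) A) ^^ k) (mat 1)"

definition mexp :: "mat3 \<Rightarrow> mat3" where
  "mexp A = (\<Sum>k. (1 / fact k) *\<^sub>R mpow A k)"

definition SL3 :: "mat3 set" where
  "SL3 = {A. det A = 1}"

definition Pb :: "mat3 set" where
  "Pb = {A \<in> SL3. \<forall>i j. j < i \<longrightarrow> A $ i $ j = 0}"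

definition nlow :: "mat3 set" where
  "nlow = {X. \<forall>i j. i \<le> j \<longrightarrow> X $ i $ j = 0}"

definition cosetP :: "mat3 \<Rightarrow> mat3 set" where
  "cosetP g = (\<lambda>p. g ** p) ` Pb"

definition admits_proj_reparam :: "mat3 \<Rightarrow> mat3 \<Rightarrow> bool" where
  "admits_proj_reparam p X \<longleftrightarrow>
     (\<exists>q\<in>Pb. \<exists>Y\<in>nlow. \<forall>\<^sub>F t in nhds 0.
        cosetP (p ** mexp (t *\<^sub>R X)) = cosetP (q ** mexp ((t / (t + 1)) *\<^sub>R Y)))"

definition only_affine_reparams :: "mat3 \<Rightarrow> mat3 \<Rightarrow> bool" where
  "only_affine_reparams p X \<longleftrightarrow>
     (\<forall>\<phi> :: real \<Rightarrow> real. \<phi> 0 = 0 \<longrightarrow>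
        (\<exists>q\<in>Pb. \<exists>Y\<in>nlow. Y \<noteq> 0 \<and> (\<forall>\<^sub>F t in nhds 0.
            cosetP (p ** mexp (\<phi> t *\<^sub>R X)) = cosetP (q ** mexp (t *\<^sub>R Y))))
        \<longrightarrow> (\<exists>a. a \<noteq> 0 \<and> (\<forall>\<^sub>F t in nhds 0. \<phi> t = a * t)))"

end

theory Submission
  imports Defs "HOL-Computational_Algebra.Polynomial"
begin


lemma lt3: "(1::3) < 2" "(0::3) < 2" "(0::3) < 1"
  by (simp_all add: less_bit1_def bit1.Rep_0 bit1.Rep_1 bit1.Rep_numeral)

lemma ne3: "(1::3) \<noteq> 0" "(2::3) \<noteq> 0" "(2::3) \<noteq> 1" "(0::3) \<noteq> 1" "(0::3) \<noteq> 2" "(1::3) \<noteq> 2"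
  by simp_all

lemma three0: "(3::3) = 0" by simp

lemma forall3: "(\<forall>i::3. P i) \<longleftrightarrow> P 0 \<and> P 1 \<and> P 2"
  using forall_3[of P] unfolding three0 by blast

lemma sum3: "sum f (UNIV::3 set) = f 0 + f 1 + f 2"
  using sum_3[of f] unfolding three0 by (simp add: ac_simps)

definition M3 :: "real \<Rightarrow> real \<Rightarrow> real \<Rightarrow> real \<Rightarrow> real \<Rightarrow> real \<Rightarrow> real \<Rightarrow> real \<Rightarrow> real \<Rightarrow> mat3" where
  "M3 a b c d e f g h k = (\<chi> i j. if i = 0 then (if j = 0 then a else if j = 1 then b else c)
      else if i = 1 then (if j = 0 then d else if j = 1 then e else f)
      else (if j = 0 then g else if j = 1 then h else k))"

lemma M3_comp [simp]:
  "M3 a b c d e f g h k $ 0 $ 0 = a" "M3 a b c d e f g h k $ 0 $ 1 = b" "M3 a b c d e f g h k $ 0 $ 2 = c"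
  "M3 a b c d e f g h k $ 1 $ 0 = d" "M3 a b c d e f g h k $ 1 $ 1 = e" "M3 a b c d e f g h k $ 1 $ 2 = f"
  "M3 a b c d e f g h k $ 2 $ 0 = g" "M3 a b c d e f g h k $ 2 $ 1 = h" "M3 a b c d e f g h k $ 2 $ 2 = k"
  by (simp_all add: M3_def)

lemma mat3_eq: "(A::mat3) = B \<longleftrightarrow> A$0$0 = B$0$0 \<and> A$0$1 = B$0$1 \<and> A$0$2 = B$0$2 \<and>
   A$1$0 = B$1$0 \<and> A$1$1 = B$1$1 \<and> A$1$2 = B$1$2 \<and> A$2$0 = B$2$0 \<and> A$2$1 = B$2$1 \<and> A$2$2 = B$2$2"
  by (auto simp: vec_eq_iff forall3)

lemma M3_eta: "(A::mat3) = M3 (A$0$0) (A$0$1) (A$0$2) (A$1$0) (A$1$1) (A$1$2) (A$2$0) (A$2$1) (A$2$2)"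
  by (simp add: mat3_eq)

lemma M3_eq_iff: "M3 a b c d e f g h k = M3 a' b' c' d' e' f' g' h' k' \<longleftrightarrow>
   a = a' \<and> b = b' \<and> c = c' \<and> d = d' \<and> e = e' \<and> f = f' \<and> g = g' \<and> h = h' \<and> k = k'"
  by (simp add: mat3_eq)

lemma M3_mult: "M3 a b c d e f g h k ** M3 a' b' c' d' e' f' g' h' k' =
  M3 (a*a' + b*d' + c*g') (a*b' + b*e' + c*h') (a*c' + b*f' + c*k')
     (d*a' + e*d' + f*g') (d*b' + e*e' + f*h') (d*c' + e*f' + f*k')
     (g*a' + h*d' + k*g') (g*b' + h*e' + k*h') (g*c' + h*f' + k*k')"
  by (simp add: mat3_eq matrix_matrix_mult_def sum3)

lemma M3_add: "M3 a b c d e f g h k + M3 a' b' c' d' e' f' g' h' k' =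
  M3 (a+a') (b+b') (c+c') (d+d') (e+e') (f+f') (g+g') (h+h') (k+k')"
  by (simp add: mat3_eq)

lemma M3_scale: "r *\<^sub>R M3 a b c d e f g h k = M3 (r*a) (r*b) (r*c) (r*d) (r*e) (r*f) (r*g) (r*h) (r*k)"
  by (simp add: mat3_eq)

lemma mat1_M3: "(mat 1 :: mat3) = M3 1 0 0 0 1 0 0 0 1"
  by (simp add: mat3_eq mat_def ne3)

lemma zero_M3: "(0 :: mat3) = M3 0 0 0 0 0 0 0 0 0"
  by (simp add: mat3_eq)

lemma det_M3: "det (M3 a b c d e f g h k) = a*e*k + b*f*g + c*d*h - a*f*h - b*d*k - c*e*g"
  using det_3[of "M3 a b c d e f g h k"] unfolding three0 by simp

lemma E_M3: "E 2 1 = M3 0 0 0 1 0 0 0 0 0" "E 3 2 = M3 0 0 0 0 0 0 0 1 0" "E 3 1 = M3 0 0 0 0 0 0 1 0 0"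
  by (simp_all add: E_def mat3_eq ne3)

lemma Pb_iff: "A \<in> Pb \<longleftrightarrow> A$1$0 = 0 \<and> A$2$0 = 0 \<and> A$2$1 = 0 \<and> A$0$0 * A$1$1 * A$2$2 = 1"
proof -
  have tri: "(\<forall>i j. j < i \<longrightarrow> A $ i $ j = 0) \<longleftrightarrow> A$1$0 = 0 \<and> A$2$0 = 0 \<and> A$2$1 = 0"
    using lt3 by (auto simp: forall3 not_less_iff_gr_or_eq)
  have d: "det A = A$0$0*A$1$1*A$2$2 + A$0$1*A$1$2*A$2$0 + A$0$2*A$1$0*A$2$1 - A$0$0*A$1$2*A$2$1 - A$0$1*A$1$0*A$2$2 - A$0$2*A$1$1*A$2$0"
    using det_3[of A] unfolding three0 by simp
  show ?thesis
    by (auto simp: Pb_def SL3_def tri d)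
qed

lemma Pb_M3: "M3 a b c d e f g h k \<in> Pb \<longleftrightarrow> d = 0 \<and> g = 0 \<and> h = 0 \<and> a*e*k = 1"
  by (simp add: Pb_iff)

lemma nlow_iff: "Y \<in> nlow \<longleftrightarrow> (\<exists>a b c. Y = M3 0 0 0 a 0 0 b c 0)"
proof -
  have "Y \<in> nlow \<longleftrightarrow> Y$0$0 = 0 \<and> Y$0$1 = 0 \<and> Y$0$2 = 0 \<and> Y$1$1 = 0 \<and> Y$1$2 = 0 \<and> Y$2$2 = 0"
    using lt3 by (auto simp: nlow_def forall3 less_imp_le)
  then show ?thesis by (subst (1 2) M3_eta) (auto simp: M3_eq_iff simp del: M3_comp)
qed

lemma mexp_low: "mexp (M3 0 0 0 a 0 0 b c 0) = M3 1 0 0 a 1 0 (b + a*c/2) c 1"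
proof -
  let ?X = "M3 0 0 0 a 0 0 b c 0"
  have S: "mpow ?X (Suc n) = ?X ** mpow ?X n" for n by (simp add: mpow_def)
  have Z: "mpow ?X 0 = mat 1" by (simp add: mpow_def)
  have m3: "mpow ?X (m + 3) = 0" for m
  proof (induction m)
    case 0
    show ?case by (simp add: numeral_3_eq_3 S Z mat1_M3 M3_mult zero_M3)
  next
    case (Suc m)
    then show ?case using S[of "m+3"] by simp
  qed
  have vanish: "n \<notin> {0,1,2} \<Longrightarrow> (1 / fact n) *\<^sub>R mpow ?X n = 0" for n
  proof -
    assume "n \<notin> {0,1,2}"
    then have "n = (n - 3) + 3" by auto
    then show ?thesis using m3[of "n-3"] by (metis scaleR_zero_right)
  qed
  have "mexp ?X = (\<Sum>n\<in>{0,1,2}. (1 / fact n) *\<^sub>R mpow ?X n)"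
    unfolding mexp_def by (rule suminf_finite) (use vanish in auto)
  also have "\<dots> = M3 1 0 0 a 1 0 (b + a*c/2) c 1"
    by (simp add: numeral_2_eq_2 S Z mat1_M3 M3_mult M3_add M3_scale M3_eq_iff)
  finally show ?thesis .
qed


lemma Pb_mult: "A \<in> Pb \<Longrightarrow> B \<in> Pb \<Longrightarrow> A ** B \<in> Pb"
  apply (subst M3_eta[of A], subst M3_eta[of B])
  apply (simp only: M3_mult Pb_M3)
  apply (simp add: Pb_iff)
  by (metis (no_types, lifting) mult.assoc mult.left_commute mult_1)

lemma Pb_inv: assumes "p \<in> Pb" shows "\<exists>p'\<in>Pb. p ** p' = mat 1"
proof -
  obtain a b c e f k where p: "p = M3 a b c 0 e f 0 0 k" and d: "a*e*k = 1"
    using assms M3_eta[of p] by (auto simp: Pb_iff)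
  let ?p' = "M3 (e*k) (-b*k) (b*f - c*e) 0 (a*k) (-a*f) 0 0 (a*e)"
  have "?p' \<in> Pb" using d by (simp add: Pb_M3 algebra_simps)
  moreover have "p ** ?p' = mat 1" using d
    by (simp add: p M3_mult mat1_M3 M3_eq_iff algebra_simps)
  ultimately show ?thesis by blast
qed

lemma one_Pb: "mat 1 \<in> Pb" by (simp add: mat1_M3 Pb_M3)

lemma Pb_image: assumes "p \<in> Pb" shows "(\<lambda>r. p ** r) ` Pb = Pb"
proof
  show "(\<lambda>r. p ** r) ` Pb \<subseteq> Pb" using Pb_mult assms by auto
  show "Pb \<subseteq> (\<lambda>r. p ** r) ` Pb"
  proof
    fix r assume r: "r \<in> Pb"
    obtain p' where p': "p' \<in> Pb" "p ** p' = mat 1" using Pb_inv assms by blast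
    have "r = p ** (p' ** r)" by (simp add: matrix_mul_assoc p')
    then show "r \<in> (\<lambda>r. p ** r) ` Pb" using Pb_mult[OF p'(1) r] by blast
  qed
qed

lemma coset_eq: assumes "p \<in> Pb" shows "cosetP (B ** p) = cosetP B"
proof -
  have "cosetP (B ** p) = (\<lambda>r. B ** r) ` ((\<lambda>r. p ** r) ` Pb)"
    unfolding cosetP_def image_image by (simp add: matrix_mul_assoc)
  then show ?thesis using Pb_image[OF assms] by (simp add: cosetP_def)
qed

lemma coset_mem: assumes "cosetP A = cosetP B" shows "\<exists>p\<in>Pb. A = B ** p"
proof -
  have "A \<in> cosetP A" unfolding cosetP_def using one_Pb by force
  then show ?thesis using assms unfolding cosetP_def by auto
qed

lemma ev_gt: "\<forall>\<^sub>F t in nhds (0::real). t > -1"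
proof -
  have "eventually (\<lambda>t. t \<in> {-1<..}) (nhds (0::real))" by (rule eventually_nhds_in_open) auto
  then show ?thesis by (rule eventually_mono) auto
qed

lemma admits_intro:
  assumes "q \<in> Pb" "Y \<in> nlow"
    and "\<And>t. t > -1 \<Longrightarrow> mexp (t *\<^sub>R X) = q ** mexp ((t/(t+1)) *\<^sub>R Y) ** P t"
    and "\<And>t. t > -1 \<Longrightarrow> P t \<in> Pb"
  shows "admits_proj_reparam (mat 1) X"
proof -
  have "\<forall>\<^sub>F t in nhds 0. cosetP (mat 1 ** mexp (t *\<^sub>R X)) = cosetP (q ** mexp ((t / (t + 1)) *\<^sub>R Y))"
    by (rule eventually_mono[OF ev_gt]) (use assms(3,4) coset_eq in auto)
  then show ?thesis unfolding admits_proj_reparam_def using assms(1,2) by blast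
qed

lemma admits_intro2:
  assumes "q \<in> Pb" "Y \<in> nlow"
    and "\<And>t v. t > -1 \<Longrightarrow> v * (1 + t) = 1 \<Longrightarrow> mexp (t *\<^sub>R X) = q ** mexp ((t * v) *\<^sub>R Y) ** P t v"
    and "\<And>t v. t > -1 \<Longrightarrow> v * (1 + t) = 1 \<Longrightarrow> P t v \<in> Pb"
  shows "admits_proj_reparam (mat 1) X"
proof (rule admits_intro[OF assms(1,2), where P = "\<lambda>t. P t (1/(1+t))"])
  fix t :: real assume t: "t > -1"
  then have v: "(1/(1+t)) * (1 + t) = 1" "t/(t+1) = t * (1/(1+t))" by (simp_all add: field_simps)
  show "mexp (t *\<^sub>R X) = q ** mexp ((t/(t+1)) *\<^sub>R Y) ** P t (1/(1+t))"
    unfolding v(2) by (rule assms(3)[OF t v(1)])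
  show "P t (1/(1+t)) \<in> Pb" by (rule assms(4)[OF t v(1)])
qed

lemma pos_E21: "admits_proj_reparam (mat 1) (E 2 1)"
  unfolding E_M3
  apply (rule admits_intro2[where q = "M3 1 (-1) 0 0 1 0 0 0 1" and Y = "M3 0 0 0 1 0 0 0 0 0"
     and P = "\<lambda>t v. M3 (1+t) 1 0 0 v 0 0 0 1"])
  apply (simp add: Pb_M3)
  apply (auto simp: nlow_iff)[1]
  apply (simp add: M3_scale mexp_low M3_mult M3_eq_iff; algebra)
  apply (simp add: Pb_M3 algebra_simps)
  done

lemma pos_E32: "admits_proj_reparam (mat 1) (E 3 2)"
  unfolding E_M3 M3_add
  apply (rule admits_intro2[where q = "M3 1 0 0 0 1 (-1) 0 0 1" and Y = "M3 0 0 0 0 0 0 0 1 0"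
     and P = "\<lambda>t v. M3 1 0 0 0 (1+t) 1 0 0 v"])
  apply (simp add: Pb_M3)
  apply (auto simp: nlow_iff)[1]
  apply (simp add: M3_scale mexp_low M3_mult M3_eq_iff; algebra)
  apply (simp add: Pb_M3 algebra_simps; algebra)
  done

lemma pos_E31: "admits_proj_reparam (mat 1) (E 3 1)"
  unfolding E_M3 M3_add
  apply (rule admits_intro2[where q = "M3 1 0 (-1) 0 1 0 0 0 1" and Y = "M3 0 0 0 0 0 0 1 0 0"
     and P = "\<lambda>t v. M3 (1+t) 0 1 0 1 0 0 0 v"])
  apply (simp add: Pb_M3)
  apply (auto simp: nlow_iff)[1]
  apply (simp add: M3_scale mexp_low M3_mult M3_eq_iff; algebra)
  apply (simp add: Pb_M3 algebra_simps; algebra)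
  done

lemma pos_E21_E31: "admits_proj_reparam (mat 1) (E 2 1 + E 3 1)"
  unfolding E_M3 M3_add
  apply (rule admits_intro2[where q = "M3 1 0 (-1) 0 1 1 0 0 1" and Y = "M3 0 0 0 0 0 0 1 0 0"
     and P = "\<lambda>t v. M3 (1+t) 0 1 0 1 (-1) 0 0 v"])
  apply (simp add: Pb_M3)
  apply (auto simp: nlow_iff)[1]
  apply (simp add: M3_scale mexp_low M3_mult M3_eq_iff; algebra)
  apply (simp add: Pb_M3 algebra_simps; algebra)
  done

lemma pos_E31_E32: "admits_proj_reparam (mat 1) (E 3 1 + E 3 2)"
  unfolding E_M3 M3_add
  apply (rule admits_intro2[where q = "M3 1 (-1) (-1) 0 1 0 0 0 1" and Y = "M3 0 0 0 0 0 0 1 0 0"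
     and P = "\<lambda>t v. M3 (1+t) (1+t) 1 0 1 0 0 0 v"])
  apply (simp add: Pb_M3)
  apply (auto simp: nlow_iff)[1]
  apply (simp add: M3_scale mexp_low M3_mult M3_eq_iff; algebra)
  apply (simp add: Pb_M3 algebra_simps; algebra)
  done

lemma pos_E21_E32: "admits_proj_reparam (mat 1) (E 2 1 + E 3 2)"
  unfolding E_M3 M3_add
  apply (rule admits_intro2[where q = "M3 1 (-2) 2 0 1 (-2) 0 0 1" and Y = "M3 0 0 0 1 0 0 0 1 0"
     and P = "\<lambda>t v. M3 ((1+t)*(1+t)) (2*(1+t)) 2 0 1 (2 * v) 0 0 (v * v)"])
  apply (simp add: Pb_M3)
  apply (auto simp: nlow_iff)[1]
  apply (simp add: M3_scale mexp_low M3_mult M3_eq_iff; algebra)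
  apply (simp add: Pb_M3 algebra_simps; algebra)
  done
lemma poly_vanish:
  fixes c0 c1 c2 c3 c4 c5 e :: real
  assumes e: "e > 0" and h: "\<And>t. \<bar>t\<bar> < e \<Longrightarrow> c0 + c1*t + c2*t^2 + c3*t^3 + c4*t^4 + c5*t^5 = 0"
  shows "c0 = 0 \<and> c1 = 0 \<and> c2 = 0 \<and> c3 = 0 \<and> c4 = 0 \<and> c5 = 0"
proof -
  let ?p = "[:c0, c1, c2, c3, c4, c5:]"
  have pv: "poly ?p t = c0 + c1*t + c2*t^2 + c3*t^3 + c4*t^4 + c5*t^5" for t
    by (simp add: algebra_simps power2_eq_square power3_eq_cube power4_eq_xxxx power_def)
  have sub: "{-e<..<e} \<subseteq> {t. poly ?p t = 0}"
  proof
    fix t assume "t \<in> {-e<..<e}"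
    then have "\<bar>t\<bar> < e" by auto
    then show "t \<in> {t. poly ?p t = 0}" unfolding mem_Collect_eq pv by (rule h)
  qed
  have "?p = 0"
  proof (rule ccontr)
    assume "?p \<noteq> 0"
    then have "finite {t. poly ?p t = 0}" by (rule poly_roots_finite)
    then have "finite {-e<..<e}" using sub finite_subset by blast
    then show False using e infinite_Ioo[of "-e" e] by simp
  qed
  then show ?thesis by simp
qed



lemma core:
  fixes x a b c k q11 q12 q13 q22 q23 q33 \<epsilon> :: real and \<phi> :: "real \<Rightarrow> real"
  assumes x: "x \<noteq> 0" and q11: "q11 \<noteq> 0" and q22: "q22 \<noteq> 0" and q33: "q33 \<noteq> 0"
    and Y: "\<not> (a = 0 \<and> b = 0 \<and> c = 0)" and eps: "\<epsilon> > 0" and hk: "2*k = a*c"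
    and hD: "\<And>t. \<bar>t\<bar> < \<epsilon> \<Longrightarrow> q11 + q12*a*t + q13*(b*t + k*t^2) \<noteq> 0"
    and h1: "\<And>t. \<bar>t\<bar> < \<epsilon> \<Longrightarrow> \<phi> t * (q11 + q12*a*t + q13*(b*t + k*t^2)) = q22*a*t + q23*(b*t + k*t^2)"
    and h2: "\<And>t. \<bar>t\<bar> < \<epsilon> \<Longrightarrow> (x * \<phi> t + (\<phi> t)^2/2) * (q11 + q12*a*t + q13*(b*t + k*t^2)) = q33*(b*t + k*t^2)"
    and h3: "\<And>t. \<bar>t\<bar> < \<epsilon> \<Longrightarrow> q12*((\<phi> t)^2/2 - x*\<phi> t) - q22*\<phi> t
        + (q13*((\<phi> t)^2/2 - x*\<phi> t) - q23*\<phi> t + q33)*c*t = 0"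
    and h4: "\<And>t. \<bar>t\<bar> < \<epsilon> \<Longrightarrow> q11*((\<phi> t)^2/2 - x*\<phi> t) + (q12*((\<phi> t)^2/2 - x*\<phi> t) - q22*\<phi> t)*a*t
        + (q13*((\<phi> t)^2/2 - x*\<phi> t) - q23*\<phi> t + q33)*(b*t + k*t^2) = 0"
  shows "\<exists>l. l \<noteq> 0 \<and> (\<forall>t. \<bar>t\<bar> < \<epsilon> \<longrightarrow> \<phi> t = l * t)"
proof -
  define n1 where "n1 = q22*a + q23*b"
  define n2 where "n2 = q23*k"
  define d1 where "d1 = q12*a + q13*b"
  define d2 where "d2 = q13*k"
  define c1 where "c1 = 2*x*n1*q11 - 2*q33*b*q11"
  define c2 where "c2 = 2*x*(n1*d1 + n2*q11) + n1^2 - 2*q33*(b*d1 + k*q11)"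
  define c3 where "c3 = 2*x*(n1*d2 + n2*d1) + 2*n1*n2 - 2*q33*(b*d2 + k*d1)"
  define c4 where "c4 = 2*x*n2*d2 + n2^2 - 2*q33*k*d2"
  have P1: "0 + c1*t + c2*t^2 + c3*t^3 + c4*t^4 + 0*t^5 = 0" if t: "\<bar>t\<bar> < \<epsilon>" for t
  proof -
    let ?D = "q11 + q12*a*t + q13*(b*t + k*t^2)"
    let ?N = "q22*a*t + q23*(b*t + k*t^2)"
    let ?u = "\<phi> t"
    have e1: "?u * ?D = ?N" by (rule h1[OF t])
    have e2: "(x * ?u + ?u^2/2) * ?D = q33*(b*t + k*t^2)" by (rule h2[OF t])
    have "2*x*?N*?D + ?N^2 - 2*(q33*(b*t + k*t^2))*?D = 0"
      unfolding e1[symmetric] e2[symmetric] by (simp add: algebra_simps power2_eq_square)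
    moreover have "2*x*?N*?D + ?N^2 - 2*(q33*(b*t + k*t^2))*?D = 0 + c1*t + c2*t^2 + c3*t^3 + c4*t^4 + 0*t^5"
      unfolding c1_def c2_def c3_def c4_def n1_def n2_def d1_def d2_def by algebra
    ultimately show ?thesis by simp
  qed
  have cz: "c1 = 0" "c2 = 0" "c3 = 0" "c4 = 0" using poly_vanish[OF eps P1] by auto
  have n1: "n1 \<noteq> 0"
  proof
    assume n0: "n1 = 0"
    have "2*q11*(x*n1 - q33*b) = 0" using cz(1) unfolding c1_def by (simp add: algebra_simps)
    then have b0: "b = 0" using n0 q11 q33 by simp
    then have a0: "a = 0" using n0 q22 unfolding n1_def by simp
    then have k0: "k = 0" using hk by simp
    define t where "t = \<epsilon>/2"
    have t: "\<bar>t\<bar> < \<epsilon>" "t \<noteq> 0" using eps by (auto simp: t_def)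
    have "\<phi> t * q11 = 0" using h1[OF t(1)] a0 b0 k0 by simp
    then have u0: "\<phi> t = 0" using q11 by simp
    have "q33*c*t = 0" using h3[OF t(1)] u0 by (simp add: algebra_simps)
    then have "c = 0" using q33 t(2) by simp
    then show False using Y a0 b0 by simp
  qed
  have xn1: "x*n1 = q33*b"
  proof -
    have "2*q11*(x*n1 - q33*b) = 0" using cz(1) unfolding c1_def by (simp add: algebra_simps)
    then show ?thesis using q11 by simp
  qed
  define Q where "Q = 2*x*n2 - 2*q33*k"
  have e2: "q11*Q + n1^2 = 0"
  proof -
    have "q11*Q + n1^2 = c2 - 2*d1*(x*n1 - q33*b)" unfolding Q_def c2_def by algebra
    then show ?thesis using cz(2) xn1 by simp
  qed
  have e3: "d1*Q + 2*n1*n2 = 0"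
  proof -
    have "d1*Q + 2*n1*n2 = c3 - 2*d2*(x*n1 - q33*b)" unfolding Q_def c3_def by algebra
    then show ?thesis using cz(3) xn1 by simp
  qed
  have e4: "d2*Q + n2^2 = 0"
  proof -
    have "d2*Q + n2^2 = c4" unfolding Q_def c4_def by algebra
    then show ?thesis using cz(4) by simp
  qed
  define e where "e = q11*n2/n1"
  have ne: "n1*e = q11*n2" using n1 by (simp add: e_def)
  have d1e: "d1 = 2*e"
  proof -
    have "d1*n1^2 = 2*n1*n2*q11"
    proof -
      have "d1*(q11*Q) = -d1*n1^2" using e2 by algebra
      moreover have "q11*(d1*Q) = -2*n1*n2*q11" using e3 by algebra
      ultimately show ?thesis by (simp add: algebra_simps)
    qed
    then have "n1*(d1*n1 - 2*n2*q11) = 0" by (simp add: algebra_simps power2_eq_square)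
    then have "d1*n1 = 2*n2*q11" using n1 by simp
    then show ?thesis using n1 by (simp add: e_def field_simps)
  qed
  have d2e: "d2*q11 = e^2"
  proof -
    have "d2*n1^2 = n2^2*q11"
    proof -
      have "d2*(q11*Q) = -d2*n1^2" using e2 by algebra
      moreover have "q11*(d2*Q) = -(n2^2)*q11" using e4 by algebra
      ultimately show ?thesis by (simp add: algebra_simps)
    qed
    then show ?thesis using n1 q11 by (simp add: e_def field_simps power2_eq_square)
  qed
  have C2: "2*x*e*n1 - 2*q33*k*q11 = -(n1^2)"
  proof -
    have "q11*Q = 2*x*e*n1 - 2*q33*k*q11" unfolding Q_def using ne by (simp add: algebra_simps)
    then show ?thesis using e2 by simp
  qed
  have uW: "\<phi> t * (q11 + e*t) = n1*t" if t: "\<bar>t\<bar> < \<epsilon>" for t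
  proof -
    let ?D = "q11 + q12*a*t + q13*(b*t + k*t^2)"
    let ?N = "q22*a*t + q23*(b*t + k*t^2)"
    let ?W = "q11 + e*t"
    have DW: "?D * q11 = ?W^2"
    proof -
      have "?D * q11 = q11^2 + d1*q11*t + (d2*q11)*t^2" unfolding d1_def d2_def by algebra
      then show ?thesis unfolding d1e d2e by (simp add: algebra_simps power2_eq_square)
    qed
    have NW: "?N * q11 = n1*t*?W"
    proof -
      have "?N * q11 = n1*q11*t + (q11*n2)*t^2" unfolding n1_def n2_def by algebra
      then show ?thesis unfolding ne[symmetric] by (simp add: algebra_simps power2_eq_square)
    qed
    have W0: "?W \<noteq> 0" using DW hD[OF t] q11 by auto
    have "\<phi> t * ?W^2 = n1*t*?W" using h1[OF t] DW NW by (metis mult.assoc)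
    then have "?W * (\<phi> t * ?W - n1*t) = 0" by (simp add: algebra_simps power2_eq_square)
    then show ?thesis using W0 by simp
  qed
  define S1 where "S1 = -q13*x*n1*q11 - q23*n1*q11 + 2*q33*q11*e"
  define S2 where "S2 = q13*n1^2/2 - q13*x*n1*e - q23*n1*e + q33*e^2"
  define a1 where "a1 = -q12*x*n1*q11 - q22*n1*q11 + c*q33*q11^2"
  define a2 where "a2 = q12*n1^2/2 - q12*x*n1*e - q22*n1*e + c*S1"
  define a3 where "a3 = c*S2"
  define b1 where "b1 = -q11*x*n1*q11 + b*q33*q11^2"
  define b2 where "b2 = q11*n1^2/2 - q11*x*n1*e + b*S1 - k*q33*q11^2"
  define b3 where "b3 = b*S2 - k*S1"
  define b4 where "b4 = -k*S2"
  have P3: "0 + a1*t + a2*t^2 + a3*t^3 + 0*t^4 + 0*t^5 = 0" if t: "\<bar>t\<bar> < \<epsilon>" for t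
    using uW[OF t] h3[OF t] unfolding a1_def a2_def a3_def S1_def S2_def by algebra
  have P4: "0 + b1*t + b2*t^2 + b3*t^3 + b4*t^4 + 0*t^5 = 0" if t: "\<bar>t\<bar> < \<epsilon>" for t
  proof -
    let ?u = "\<phi> t"
    let ?M = "?u^2/2 - x*?u"
    have F2': "q11*?M + (b*t - k*t^2)*(q13*?M - q23*?u + q33) = 0"
      using h3[OF t] h4[OF t] hk by algebra
    show ?thesis
      using uW[OF t] F2' unfolding b1_def b2_def b3_def b4_def S1_def S2_def by algebra
  qed
  have az: "a1 = 0" "a2 = 0" "a3 = 0" using poly_vanish[OF eps P3] by auto
  have bz: "b1 = 0" "b2 = 0" "b3 = 0" "b4 = 0" using poly_vanish[OF eps P4] by auto
  have bne: "b \<noteq> 0" using xn1 x n1 by auto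
  have hq: "q23 = -x*q13"
  proof -
    have "b2 = -b*q11*n1*(q13*x + q23)"
      using C2 xn1 unfolding b2_def S1_def by algebra
    then have "b*q11*n1*(q13*x + q23) = 0" using bz(2) by simp
    then have "q13*x + q23 = 0" using bne q11 n1 by simp
    then show ?thesis by (simp add: algebra_simps)
  qed
  have S1e: "S1 = 2*q33*q11*e" unfolding S1_def hq by (simp add: algebra_simps)
  have e0: "e = 0"
  proof (cases "k = 0")
    case False
    then have "S2 = 0" using bz(4) unfolding b4_def by simp
    then have "k*S1 = 0" using bz(3) unfolding b3_def by simp
    then have "S1 = 0" using False by simp
    then show ?thesis using S1e q33 q11 by simp
  next
    case True
    then have ac: "a = 0 \<or> c = 0" using hk by simp
    show ?thesis
    proof (cases "c = 0")
      case True
      have "n1*q11*(q12*x + q22) = 0" using az(1) True unfolding a1_def by algebra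
      then have z: "q12*x + q22 = 0" using n1 q11 by simp
      have "a2 = q12*n1^2/2 - (q12*x + q22)*n1*e" unfolding a2_def True by (simp add: algebra_simps)
      then have "q12*n1^2 = 0" using az(2) z by simp
      then have "q12 = 0" using n1 by simp
      then show ?thesis using z q22 by simp
    next
      case False
      then have a0: "a = 0" using ac by simp
      have S20: "S2 = 0" using az(3) False unfolding a3_def by simp
      have "n1*(n1 + 2*x*e) = 0" using C2 True by algebra
      then have "n1 + 2*x*e = 0" using n1 by simp
      then have n1e: "n1 = -2*x*e" by simp
      have n1b: "n1 = q23*b" using a0 unfolding n1_def by simp
      show ?thesis
      proof (rule ccontr)
        assume en: "e \<noteq> 0"
        have "e^2*(2*q13*x^2 + q33) = 0" using S20 n1e hq unfolding S2_def by algebra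
        then have "2*q13*x^2 + q33 = 0" using en by simp
        then have h33: "q33 = -2*x^2*q13" by algebra
        have "b*(x*q23 - q33) = 0" using xn1 n1b by algebra
        then have "x*q23 = q33" using bne by simp
        then have "q33 = -(x^2*q13)" using hq by (simp add: power2_eq_square)
        then have "x^2*q13 = 0" using h33 by auto
        then have "q13 = 0" using x by simp
        then show False using h33 q33 by simp
      qed
    qed
  qed
  show ?thesis
  proof (intro exI[of _ "n1/q11"] conjI allI impI)
    show "n1/q11 \<noteq> 0" using n1 q11 by simp
    fix t assume t: "\<bar>t\<bar> < \<epsilon>"
    have "\<phi> t * q11 = n1*t" using uW[OF t] e0 by simp
    then show "\<phi> t = n1/q11 * t" using q11 by (simp add: field_simps)
  qed
qed



lemma upper_inv_row:
  assumes "K ** M3 p11 p12 p13 0 p22 p23 0 0 p33 = mat 1" "p11 \<noteq> 0" "p22 \<noteq> 0"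
  shows "K$2$0 = 0 \<and> K$2$1 = 0"
proof -
  have "K$2$0 * p11 = 0 \<and> K$2$0 * p12 + K$2$1 * p22 = 0"
    using assms(1) by (subst (asm) M3_eta[of K]) (simp add: M3_mult mat1_M3 M3_eq_iff)
  then show ?thesis using assms(2,3) by auto
qed

lemma ev_ball: "\<forall>\<^sub>F t in nhds (0::real). P t \<Longrightarrow> \<exists>\<epsilon>>0. \<forall>t. \<bar>t\<bar> < \<epsilon> \<longrightarrow> P t"
  by (auto simp: eventually_nhds_metric dist_real_def)

lemma only_aff:
  fixes x :: real
  assumes x: "x \<noteq> 0"
  shows "only_affine_reparams (mat 1) (E 2 1 + x *\<^sub>R E 3 1 + E 3 2)"
  unfolding only_affine_reparams_def
proof (intro allI impI)
  fix \<phi> :: "real \<Rightarrow> real"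
  assume "\<phi> 0 = 0" and "(\<exists>q\<in>Pb. \<exists>Y\<in>nlow. Y \<noteq> 0 \<and> (\<forall>\<^sub>F t in nhds 0.
            cosetP (mat 1 ** mexp (\<phi> t *\<^sub>R (E 2 1 + x *\<^sub>R E 3 1 + E 3 2))) = cosetP (q ** mexp (t *\<^sub>R Y))))"
  then obtain q Y where q: "q \<in> Pb" and Y: "Y \<in> nlow" "Y \<noteq> 0" and
    ev: "\<forall>\<^sub>F t in nhds 0. cosetP (mat 1 ** mexp (\<phi> t *\<^sub>R (E 2 1 + x *\<^sub>R E 3 1 + E 3 2))) = cosetP (q ** mexp (t *\<^sub>R Y))"
    by blast
  obtain \<epsilon> where eps: "\<epsilon> > 0" and H: "\<And>t. \<bar>t\<bar> < \<epsilon> \<Longrightarrow>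
     cosetP (mat 1 ** mexp (\<phi> t *\<^sub>R (E 2 1 + x *\<^sub>R E 3 1 + E 3 2))) = cosetP (q ** mexp (t *\<^sub>R Y))"
    using ev_ball[OF ev] by blast
  obtain q11 q12 q13 q22 q23 q33 where qM: "q = M3 q11 q12 q13 0 q22 q23 0 0 q33" and qd: "q11*q22*q33 = 1"
    using q M3_eta[of q] by (auto simp: Pb_iff)
  obtain a b c where YM: "Y = M3 0 0 0 a 0 0 b c 0" using Y(1) by (auto simp: nlow_iff)
  have abc: "\<not> (a = 0 \<and> b = 0 \<and> c = 0)" using Y(2) YM zero_M3 by auto
  have XM: "E 2 1 + x *\<^sub>R E 3 1 + E 3 2 = M3 0 0 0 1 0 0 x 1 0" unfolding E_M3 by (simp add: M3_add M3_scale)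
  define k where "k = a*c/2"
  have hk: "2*k = a*c" by (simp add: k_def)
  have facts: "q11 + q12*a*t + q13*(b*t + k*t^2) \<noteq> 0
     \<and> \<phi> t * (q11 + q12*a*t + q13*(b*t + k*t^2)) = q22*a*t + q23*(b*t + k*t^2)
     \<and> (x * \<phi> t + (\<phi> t)^2/2) * (q11 + q12*a*t + q13*(b*t + k*t^2)) = q33*(b*t + k*t^2)
     \<and> q12*((\<phi> t)^2/2 - x*\<phi> t) - q22*\<phi> t + (q13*((\<phi> t)^2/2 - x*\<phi> t) - q23*\<phi> t + q33)*c*t = 0
     \<and> q11*((\<phi> t)^2/2 - x*\<phi> t) + (q12*((\<phi> t)^2/2 - x*\<phi> t) - q22*\<phi> t)*a*t
        + (q13*((\<phi> t)^2/2 - x*\<phi> t) - q23*\<phi> t + q33)*(b*t + k*t^2) = 0"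
    if t: "\<bar>t\<bar> < \<epsilon>" for t
  proof -
    define u where "u = \<phi> t"
    obtain p where p: "p \<in> Pb" and Lp: "mat 1 ** mexp (u *\<^sub>R (E 2 1 + x *\<^sub>R E 3 1 + E 3 2)) = q ** mexp (t *\<^sub>R Y) ** p"
      using coset_mem[OF H[OF t]] unfolding u_def by blast
    obtain p11 p12 p13 p22 p23 p33 where pM: "p = M3 p11 p12 p13 0 p22 p23 0 0 p33" and pd: "p11*p22*p33 = 1"
      using p M3_eta[of p] by (auto simp: Pb_iff)
    let ?L = "M3 1 0 0 u 1 0 (u*x + u*u/2) u 1"
    let ?E = "M3 1 0 0 (t*a) 1 0 (t*b + t*a*(t*c)/2) (t*c) 1"
    let ?q = "M3 q11 q12 q13 0 q22 q23 0 0 q33"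
    let ?p = "M3 p11 p12 p13 0 p22 p23 0 0 p33"
    have eq1: "?L = ?q ** ?E ** ?p"
      using Lp unfolding XM YM qM pM by (simp add: M3_scale mexp_low)
    let ?Li = "M3 1 0 0 (-u) 1 0 (u*u/2 - u*x) (-u) 1"
    have LiL: "?Li ** ?L = mat 1" by (simp add: M3_mult mat1_M3 M3_eq_iff algebra_simps)
    have "(?Li ** ?q ** ?E) ** ?p = mat 1"
      using LiL unfolding eq1 by (simp add: matrix_mul_assoc)
    then have K: "(?Li ** ?q ** ?E)$2$0 = 0 \<and> (?Li ** ?q ** ?E)$2$1 = 0"
      by (rule upper_inv_row) (use pd in auto)
    have c0: "1 = (q11 + q12*(t*a) + q13*(t*b + t*a*(t*c)/2)) * p11"
      using arg_cong[OF eq1, of "\<lambda>A. A$0$0"] by (simp add: M3_mult algebra_simps)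
    have c1: "u = (q22*(t*a) + q23*(t*b + t*a*(t*c)/2)) * p11"
      using arg_cong[OF eq1, of "\<lambda>A. A$1$0"] by (simp add: M3_mult algebra_simps)
    have c2: "u*x + u*u/2 = q33*(t*b + t*a*(t*c)/2) * p11"
      using arg_cong[OF eq1, of "\<lambda>A. A$2$0"] by (simp add: M3_mult algebra_simps)
    have Dk: "q11 + q12*(t*a) + q13*(t*b + t*a*(t*c)/2) = q11 + q12*a*t + q13*(b*t + k*t^2)"
      unfolding k_def by (simp add: algebra_simps power2_eq_square)
    have Nk: "q22*(t*a) + q23*(t*b + t*a*(t*c)/2) = q22*a*t + q23*(b*t + k*t^2)"
      unfolding k_def by (simp add: algebra_simps power2_eq_square)
    have Bk: "t*b + t*a*(t*c)/2 = b*t + k*t^2"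
      unfolding k_def by (simp add: algebra_simps power2_eq_square)
    have f1: "q11 + q12*a*t + q13*(b*t + k*t^2) \<noteq> 0" using c0 Dk by auto
    have f2: "u * (q11 + q12*a*t + q13*(b*t + k*t^2)) = q22*a*t + q23*(b*t + k*t^2)"
      using c0 c1 unfolding Dk Nk by algebra
    have f3: "(x * u + u^2/2) * (q11 + q12*a*t + q13*(b*t + k*t^2)) = q33*(b*t + k*t^2)"
      using c0 c2 unfolding Dk Bk by algebra
    have f4: "q12*(u^2/2 - x*u) - q22*u + (q13*(u^2/2 - x*u) - q23*u + q33)*c*t = 0"
      using K by (simp add: M3_mult) algebra
    have K20: "(?Li ** ?q ** ?E)$2$0 = 0" using K by blast
    have f5: "q11*(u^2/2 - x*u) + (q12*(u^2/2 - x*u) - q22*u)*a*t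
        + (q13*(u^2/2 - x*u) - q23*u + q33)*(b*t + k*t^2) = 0"
      using K20 unfolding k_def by (simp add: M3_mult) (simp add: field_simps power2_eq_square)
    show ?thesis using f1 f2 f3 f4 f5 unfolding u_def by blast
  qed
  have q11: "q11 \<noteq> 0" and q22: "q22 \<noteq> 0" and q33: "q33 \<noteq> 0" using qd by auto
  obtain l where "l \<noteq> 0" "\<forall>t. \<bar>t\<bar> < \<epsilon> \<longrightarrow> \<phi> t = l * t"
    using core[OF x q11 q22 q33 abc eps hk] facts by blast
  moreover have "\<forall>\<^sub>F t in nhds 0. \<bar>t\<bar> < \<epsilon>"
    using eps by (auto simp: eventually_nhds_metric dist_real_def)
  ultimately show "\<exists>a. a \<noteq> 0 \<and> (\<forall>\<^sub>F t in nhds 0. \<phi> t = a * t)"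
    by (intro exI[of _ l] conjI) (auto elim!: eventually_mono)
qed



lemma not_admits:
  fixes x :: real
  assumes x: "x \<noteq> 0"
  shows "\<not> admits_proj_reparam (mat 1) (E 2 1 + x *\<^sub>R E 3 1 + E 3 2)"
proof
  let ?X = "E 2 1 + x *\<^sub>R E 3 1 + E 3 2"
  assume "admits_proj_reparam (mat 1) ?X"
  then obtain q Y where q: "q \<in> Pb" and Y: "Y \<in> nlow" and
    ev: "\<forall>\<^sub>F t in nhds 0. cosetP (mat 1 ** mexp (t *\<^sub>R ?X)) = cosetP (q ** mexp ((t / (t + 1)) *\<^sub>R Y))"
    unfolding admits_proj_reparam_def by blast
  obtain \<epsilon> where eps: "\<epsilon> > 0" and H: "\<And>t. \<bar>t\<bar> < \<epsilon> \<Longrightarrow>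
     cosetP (mat 1 ** mexp (t *\<^sub>R ?X)) = cosetP (q ** mexp ((t / (t + 1)) *\<^sub>R Y))"
    using ev_ball[OF ev] by blast
  have XM: "?X = M3 0 0 0 1 0 0 x 1 0" unfolding E_M3 by (simp add: M3_add M3_scale)
  show False
  proof (cases "Y = 0")
    case True
    define t where "t = \<epsilon>/2"
    have t: "\<bar>t\<bar> < \<epsilon>" "t \<noteq> 0" using eps by (auto simp: t_def)
    have "mexp ((t / (t + 1)) *\<^sub>R Y) = mat 1"
      unfolding True zero_M3 by (simp add: M3_scale mexp_low mat1_M3)
    then obtain p where p: "p \<in> Pb" and "mat 1 ** mexp (t *\<^sub>R ?X) = q ** p"
      using coset_mem[OF H[OF t(1)]] by auto
    then have "mexp (t *\<^sub>R ?X) \<in> Pb" using Pb_mult[OF q p] by simp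
    then have "t = 0" unfolding XM by (simp add: M3_scale mexp_low Pb_M3)
    then show False using t(2) by simp
  next
    case False
    define \<psi> where "\<psi> s = s / (1 - s)" for s :: real
    define \<delta> where "\<delta> = min (1/2) (\<epsilon>/2)"
    have d: "\<delta> > 0" using eps by (simp add: \<delta>_def)
    have key: "cosetP (mat 1 ** mexp (\<psi> s *\<^sub>R ?X)) = cosetP (q ** mexp (s *\<^sub>R Y))" if s: "\<bar>s\<bar> < \<delta>" for s
    proof -
      have s1: "1 - s > 1/2" using s by (auto simp: \<delta>_def)
      have "\<bar>\<psi> s\<bar> = \<bar>s\<bar> / (1 - s)" using s1 by (simp add: \<psi>_def abs_divide)
      also have "\<dots> \<le> 2 * \<bar>s\<bar>"
      proof -
        have "0 \<le> abs s * (1 - 2 * s)" using s1 by simp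
        then have "abs s \<le> 2 * abs s * (1 - s)" by (simp add: algebra_simps)
        then show ?thesis using s1 by (simp add: pos_divide_le_eq)
      qed
      also have "\<dots> < \<epsilon>" using s by (auto simp: \<delta>_def)
      finally have "\<bar>\<psi> s\<bar> < \<epsilon>" .
      moreover have "\<psi> s / (\<psi> s + 1) = s" using s1 by (simp add: \<psi>_def field_simps)
      ultimately show ?thesis using H[of "\<psi> s"] by simp
    qed
    have "\<forall>\<^sub>F s in nhds 0. cosetP (mat 1 ** mexp (\<psi> s *\<^sub>R ?X)) = cosetP (q ** mexp (s *\<^sub>R Y))"
      using d key by (auto simp: eventually_nhds_metric dist_real_def)
    moreover have "\<psi> 0 = 0" by (simp add: \<psi>_def)
    ultimately obtain a where a: "a \<noteq> 0" and ev2: "\<forall>\<^sub>F s in nhds 0. \<psi> s = a * s"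
      using only_aff[OF x] q Y False unfolding only_affine_reparams_def by blast
    obtain \<eta> where eta: "\<eta> > 0" and H2: "\<And>s. \<bar>s\<bar> < \<eta> \<Longrightarrow> \<psi> s = a * s"
      using ev_ball[OF ev2] by blast
    define s1 where "s1 = min \<eta> (1/2) / 2"
    define s2 where "s2 = s1 / 2"
    have s: "0 < s1" "s1 < \<eta>" "s1 < 1/2" "0 < s2" "s2 < \<eta>" "s2 < 1/2" "s1 \<noteq> s2"
      using eta by (auto simp: s1_def s2_def)
    have "s1 / (1 - s1) = a * s1" using H2[of s1] s by (simp add: \<psi>_def)
    then have "s1 = a * s1 * (1 - s1)" using s by (simp add: field_simps)
    then have "s1 * (1 - a * (1 - s1)) = 0" by (simp add: algebra_simps)
    then have e1: "1 = a * (1 - s1)" using s by simp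
    have "s2 / (1 - s2) = a * s2" using H2[of s2] s by (simp add: \<psi>_def)
    then have "s2 = a * s2 * (1 - s2)" using s by (simp add: field_simps)
    then have "s2 * (1 - a * (1 - s2)) = 0" by (simp add: algebra_simps)
    then have e2: "1 = a * (1 - s2)" using s by simp
    from e1 e2 have "a * (s1 - s2) = 0" by algebra
    then show False using a s by simp
  qed
qed


theorem mainTheorem5:
  shows "admits_proj_reparam (mat 1) (E 2 1)
       \<and> admits_proj_reparam (mat 1) (E 3 2)
       \<and> admits_proj_reparam (mat 1) (E 2 1 + E 3 2)
       \<and> admits_proj_reparam (mat 1) (E 2 1 + E 3 1)
       \<and> admits_proj_reparam (mat 1) (E 3 1 + E 3 2)
       \<and> admits_proj_reparam (mat 1) (E 3 1)
       \<and> (\<forall>x::real. x \<noteq> 0 \<longrightarrow>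
            \<not> admits_proj_reparam (mat 1) (E 2 1 + x *\<^sub>R E 3 1 + E 3 2)
            \<and> only_affine_reparams (mat 1) (E 2 1 + x *\<^sub>R E 3 1 + E 3 2))
       \<and> \<not> admits_proj_reparam (mat 1) (E 2 1 + E 3 1 + E 3 2)
       \<and> only_affine_reparams (mat 1) (E 2 1 + E 3 1 + E 3 2)"
proof -
  have a: "\<forall>x::real. x \<noteq> 0 \<longrightarrow>
            \<not> admits_proj_reparam (mat 1) (E 2 1 + x *\<^sub>R E 3 1 + E 3 2)
            \<and> only_affine_reparams (mat 1) (E 2 1 + x *\<^sub>R E 3 1 + E 3 2)"
    using not_admits only_aff by blast
  have b: "\<not> admits_proj_reparam (mat 1) (E 2 1 + E 3 1 + E 3 2)"
    using not_admits[of 1] by simp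
  have c: "only_affine_reparams (mat 1) (E 2 1 + E 3 1 + E 3 2)"
    using only_aff[of 1] by simp
  show ?thesis using pos_E21 pos_E32 pos_E21_E32 pos_E21_E31 pos_E31_E32 pos_E31 a b c by blast
qed

end
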